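(* Let $d\ge 2$ and let $C$, $C_1$, $C_2$ be $d$-dimensional copulas admitting tail copulas $\Lambda(\cdot;C)$, $\Lambda_1(\cdot;C_1)$, $\Lambda_2(\cdot;C_2)$, respectively. Then: (i) The supremum in $\lambda^\ast(C)=\sup_{\bm b\in\mathcal B}\Lambda(\bm b;C)$ is attained; hence $\lambda^\ast(C)=\max_{\bm b\in\mathcal B}\Lambda(\bm b;C)$. (ii) $\lambda^\ast(C)=1$ if and only if $\Lambda(\bm x;C)=\min\{x_1,\dots,x_d\}$ for all $\bm x\in(0,\infty)^d$. (iii) $\lambda^\ast(C)=0$ if and only if $\Lambda(\bm x;C)=0$ for all $\bm x\in(0,\infty)^d$. (iv) If $\Lambda_1(\bm x;C_1)\le\Lambda_2(\bm x;C_2)$ for all $\bm x\in(0,\infty)^d$, then $\lambda^\ast(C_1)\le\lambda^\ast(C_2)$. (v) For all $t\in[0,1]$, $\lambda^\ast(tC_1+(1-t)C_2)\le t\lambda^\ast(C_1)+(1-t)\lambda^\ast(C_2)$. (vi) Let $(C_n)_{n\in\mathbb N}$ be a sequence of $d$-dimensional copulas each admitting a tail copula. If $\Lambda(\bm x;C_n)\to\Lambda(\bm x;C)$ for every $\bm x\in(0,\infty)^d$, then $\lambda^\ast(C_n)\to\lambda^\ast(C)$.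
   Context: A $d$-dimensional copula is a distribution function on $[0,1]^d$ with standard uniform margins. If for a copula $C$ the limit $\Lambda(\bm x;C)=\lim_{t\downarrow0}C(t\bm x)/t$ exists for every $\bm x\in(0,\infty)^d$, the function $\Lambda(\cdot;C):(0,\infty)^d\to[0,\infty)$ is called the (lower) tail copula of $C$. Let $\mathcal B=\{\bm b\in(0,\infty)^d:\prod_{j=1}^d b_j=1\}$. The maximal tail concordance measure (MTCM) of $C$ is $\lambda^\ast(C)=\sup_{\bm b\in\mathcal B}\Lambda(\bm b;C)$. *)

theory Defs
  imports "HOL-Probability.Probability"
begin

text \<open>A d-dimensional copula (d = CARD('d)): the distribution function, restricted to
  the unit cube, of a Borel probability measure on real^'d with standard uniform margins.\<close>
definition is_copula :: "(real ^ 'd \<Rightarrow> real) \<Rightarrow> bool" where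
  "is_copula C \<longleftrightarrow>
     (\<exists>M :: (real ^ 'd) measure.
        prob_space M \<and> sets M = sets borel \<and>
        (\<forall>j. \<forall>s\<in>{0..1}. measure M {x. x $ j \<le> s} = s) \<and>
        (\<forall>u. (\<forall>i. u $ i \<in> {0..1}) \<longrightarrow> C u = measure M {x. \<forall>i. x $ i \<le> u $ i}))"

definition pos_orthant :: "(real ^ 'd) set" where
  "pos_orthant = {x. \<forall>i. 0 < x $ i}"

definition has_tail_copula :: "(real ^ 'd \<Rightarrow> real) \<Rightarrow> bool" where
  "has_tail_copula C \<longleftrightarrow>
     (\<forall>x\<in>pos_orthant. \<exists>L. ((\<lambda>t. C (t *\<^sub>R x) / t) \<longlongrightarrow> L) (at_right 0))"

definition tail_copula :: "(real ^ 'd \<Rightarrow> real) \<Rightarrow> real ^ 'd \<Rightarrow> real" where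
  "tail_copula C x = Lim (at_right 0) (\<lambda>t. C (t *\<^sub>R x) / t)"

definition B_set :: "(real ^ 'd) set" where
  "B_set = {b. (\<forall>i. 0 < b $ i) \<and> (\<Prod>i\<in>UNIV. b $ i) = 1}"

definition mtcm :: "(real ^ 'd \<Rightarrow> real) \<Rightarrow> real" where
  "mtcm C = (SUP b\<in>B_set. tail_copula C b)"

end

theory Submission
  imports Defs
begin


lemma closed_le_set: "closed {x::real^'d. \<forall>i. x $ i \<le> u $ i}"
  by (intro closed_Collect_all closed_Collect_le continuous_intros)

lemma closed_le1: "closed {x::real^'d. x $ j \<le> s}"
  by (intro closed_Collect_le continuous_intros)

lemma cop_bounds:
  fixes C :: "real ^ 'd \<Rightarrow> real"
  assumes "is_copula C" "\<forall>i. u $ i \<in> {0..1}"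
  shows "0 \<le> C u \<and> C u \<le> u $ j"
proof -
  obtain M :: "(real^'d) measure" where M: "prob_space M" "sets M = sets borel"
    "\<forall>j. \<forall>s\<in>{0..1}. measure M {x. x $ j \<le> s} = s"
    "\<forall>u. (\<forall>i. u $ i \<in> {0..1}) \<longrightarrow> C u = measure M {x. \<forall>i. x $ i \<le> u $ i}"
    using assms(1) unfolding is_copula_def by blast
  interpret prob_space M by fact
  have "C u = measure M {x. \<forall>i. x $ i \<le> u $ i}" using M(4) assms(2) by blast
  also have "\<dots> \<le> measure M {x. x $ j \<le> u $ j}"
    by (rule finite_measure_mono) (auto simp: M(2) closed_le1 borel_closed)
  also have "\<dots> = u $ j" using M(3) assms(2) by blast
  finally show ?thesis using \<open>C u = _\<close> by simp
qed

lemma cop_mono: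
  fixes C :: "real ^ 'd \<Rightarrow> real"
  assumes "is_copula C" "\<forall>i. u $ i \<in> {0..1}" "\<forall>i. v $ i \<in> {0..1}" "\<forall>i. u $ i \<le> v $ i"
  shows "C u \<le> C v"
proof -
  obtain M :: "(real^'d) measure" where M: "prob_space M" "sets M = sets borel"
    "\<forall>j. \<forall>s\<in>{0..1}. measure M {x. x $ j \<le> s} = s"
    "\<forall>u. (\<forall>i. u $ i \<in> {0..1}) \<longrightarrow> C u = measure M {x. \<forall>i. x $ i \<le> u $ i}"
    using assms(1) unfolding is_copula_def by blast
  interpret prob_space M by fact
  have "C u = measure M {x. \<forall>i. x $ i \<le> u $ i}" using M(4) assms(2) by blast
  also have "\<dots> \<le> measure M {x. \<forall>i. x $ i \<le> v $ i}"
    using assms(4) by (intro finite_measure_mono) (auto simp: M(2) closed_le_set borel_closed intro: order_trans)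
  also have "\<dots> = C v" using M(4) assms(3) by simp
  finally show ?thesis .
qed

lemma cop_lip:
  fixes C :: "real ^ 'd \<Rightarrow> real"
  assumes "is_copula C" "\<forall>i. u $ i \<in> {0..1}" "\<forall>i. v $ i \<in> {0..1}"
  shows "C v - C u \<le> (\<Sum>i\<in>UNIV. \<bar>v $ i - u $ i\<bar>)"
proof -
  obtain M :: "(real^'d) measure" where M: "prob_space M" "sets M = sets borel"
    "\<forall>j. \<forall>s\<in>{0..1}. measure M {x. x $ j \<le> s} = s"
    "\<forall>u. (\<forall>i. u $ i \<in> {0..1}) \<longrightarrow> C u = measure M {x. \<forall>i. x $ i \<le> u $ i}"
    using assms(1) unfolding is_copula_def by blast
  interpret prob_space M by fact
  define D where "D i = {x::real^'d. x $ i \<le> v $ i} - {x. x $ i \<le> u $ i}" for i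
  have Dm: "D i \<in> sets M" for i unfolding D_def
    by (intro sets.Diff) (auto simp: M(2) closed_le1 borel_closed)
  have DU: "(\<Union>i. D i) \<in> sets M" using Dm by (intro sets.finite_UN) auto
  have Dle: "measure M (D i) \<le> \<bar>v $ i - u $ i\<bar>" for i
  proof (cases "v $ i \<le> u $ i")
    case True
    then have "D i = {}" unfolding D_def by auto
    then show ?thesis by simp
  next
    case False
    have "measure M (D i) = measure M {x::real^'d. x $ i \<le> v $ i} - measure M {x. x $ i \<le> u $ i}"
      unfolding D_def using False
      by (intro finite_measure_Diff) (auto simp: M(2) closed_le1 borel_closed)
    also have "\<dots> = v $ i - u $ i" using M(3) assms(2,3) by simp
    finally show ?thesis by simp
  qed
  have "C v = measure M {x. \<forall>i. x $ i \<le> v $ i}" using M(4) assms(3) by blast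
  also have "\<dots> \<le> measure M ({x. \<forall>i. x $ i \<le> u $ i} \<union> (\<Union>i. D i))"
    by (rule finite_measure_mono) (auto simp: D_def M(2) closed_le_set borel_closed Dm)
  also have "\<dots> \<le> measure M {x. \<forall>i. x $ i \<le> u $ i} + measure M (\<Union>i. D i)"
    using DU by (intro measure_subadditive) (auto simp: M(2) closed_le_set borel_closed)
  also have "measure M (\<Union>i. D i) \<le> (\<Sum>i\<in>UNIV. measure M (D i))"
    by (rule finite_measure_subadditive_finite) (auto simp: Dm)
  also have "\<dots> \<le> (\<Sum>i\<in>UNIV. \<bar>v $ i - u $ i\<bar>)" by (intro sum_mono Dle)
  finally show ?thesis using M(4) assms(2) by simp
qed



lemma ev_cube:
  fixes x :: "real^'d"
  assumes "x \<in> pos_orthant"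
  shows "eventually (\<lambda>t. 0 < t \<and> (\<forall>i. (t *\<^sub>R x) $ i \<in> {0..1})) (at_right 0)"
proof -
  define m where "m = Max (range (\<lambda>i. x $ i))"
  have xm: "x $ i \<le> m" for i unfolding m_def by (intro Max_ge) auto
  have mpos: "0 < m" using xm[of undefined] assms by (auto simp: pos_orthant_def intro: less_le_trans)
  have "\<forall>t>0. t < 1/m \<longrightarrow> 0 < t \<and> (\<forall>i. (t *\<^sub>R x) $ i \<in> {0..1})"
  proof (intro allI impI)
    fix t :: real assume t: "0 < t" "t < 1/m"
    show "0 < t \<and> (\<forall>i. (t *\<^sub>R x) $ i \<in> {0..1})"
    proof (intro conjI allI)
      show "0 < t" using t by simp
      fix i
      have "t * x $ i \<le> t * m" using t xm[of i] by (intro mult_left_mono) auto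
      also have "\<dots> \<le> 1" using t mpos by (simp add: field_simps)
      finally show "(t *\<^sub>R x) $ i \<in> {0..1}" using t assms by (auto simp: pos_orthant_def less_imp_le)
    qed
  qed
  then show ?thesis unfolding eventually_at_right_field using mpos
    by (intro exI[of _ "1/m"]) auto
qed

lemma tc_tendsto:
  assumes "has_tail_copula C" "x \<in> pos_orthant"
  shows "((\<lambda>t. C (t *\<^sub>R x) / t) \<longlongrightarrow> tail_copula C x) (at_right 0)"
proof -
  obtain L where L: "((\<lambda>t. C (t *\<^sub>R x) / t) \<longlongrightarrow> L) (at_right 0)"
    using assms unfolding has_tail_copula_def by blast
  have "tail_copula C x = L" unfolding tail_copula_def
    by (rule tendsto_Lim[OF _ L]) simp
  then show ?thesis using L by simp
qed

lemma tc_bounds: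
  fixes C :: "real ^ 'd \<Rightarrow> real"
  assumes "is_copula C" "has_tail_copula C" "x \<in> pos_orthant"
  shows "0 \<le> tail_copula C x \<and> tail_copula C x \<le> x $ j"
proof
  have ev: "eventually (\<lambda>t. 0 \<le> C (t *\<^sub>R x) / t \<and> C (t *\<^sub>R x) / t \<le> x $ j) (at_right 0)"
    using ev_cube[OF assms(3)]
  proof eventually_elim
    case (elim t)
    then have "0 \<le> C (t *\<^sub>R x) \<and> C (t *\<^sub>R x) \<le> t * x $ j"
      using cop_bounds[OF assms(1), of "t *\<^sub>R x" j] by auto
    then show ?case using elim by (auto simp: field_simps)
  qed
  show "0 \<le> tail_copula C x"
    by (rule tendsto_lowerbound[OF tc_tendsto[OF assms(2,3)]]) (use ev in \<open>auto elim: eventually_mono\<close>)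
  show "tail_copula C x \<le> x $ j"
    by (rule tendsto_upperbound[OF tc_tendsto[OF assms(2,3)]]) (use ev in \<open>auto elim: eventually_mono\<close>)
qed

lemma tc_lip:
  fixes C :: "real ^ 'd \<Rightarrow> real"
  assumes "is_copula C" "has_tail_copula C" "x \<in> pos_orthant" "y \<in> pos_orthant"
  shows "tail_copula C y - tail_copula C x \<le> (\<Sum>i\<in>UNIV. \<bar>y $ i - x $ i\<bar>)"
proof -
  have ev: "eventually (\<lambda>t. C (t *\<^sub>R y) / t - C (t *\<^sub>R x) / t \<le> (\<Sum>i\<in>UNIV. \<bar>y $ i - x $ i\<bar>)) (at_right 0)"
    using eventually_conj[OF ev_cube[OF assms(3)] ev_cube[OF assms(4)]]
  proof eventually_elim
    case (elim t)
    then have "C (t *\<^sub>R y) - C (t *\<^sub>R x) \<le> (\<Sum>i\<in>UNIV. \<bar>(t *\<^sub>R y) $ i - (t *\<^sub>R x) $ i\<bar>)"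
      using cop_lip[OF assms(1), of "t *\<^sub>R x" "t *\<^sub>R y"] by auto
    also have "\<dots> = t * (\<Sum>i\<in>UNIV. \<bar>y $ i - x $ i\<bar>)"
      using elim by (simp add: sum_distrib_left abs_mult flip: right_diff_distrib)
    finally show ?case using elim by (simp add: field_simps)
  qed
  show ?thesis
    by (rule tendsto_upperbound[OF tendsto_diff[OF tc_tendsto[OF assms(2,4)] tc_tendsto[OF assms(2,3)]] ev]) simp
qed

lemma tc_mono:
  fixes C :: "real ^ 'd \<Rightarrow> real"
  assumes "is_copula C" "has_tail_copula C" "x \<in> pos_orthant" "y \<in> pos_orthant" "\<forall>i. x $ i \<le> y $ i"
  shows "tail_copula C x \<le> tail_copula C y"
proof -
  have ev: "eventually (\<lambda>t. C (t *\<^sub>R x) / t \<le> C (t *\<^sub>R y) / t) (at_right 0)"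
    using eventually_conj[OF ev_cube[OF assms(3)] ev_cube[OF assms(4)]]
  proof eventually_elim
    case (elim t)
    then have "C (t *\<^sub>R x) \<le> C (t *\<^sub>R y)"
      using assms(5) by (intro cop_mono[OF assms(1)]) (auto intro: mult_left_mono)
    then show ?case using elim by (simp add: divide_right_mono)
  qed
  show ?thesis
    by (rule tendsto_le[OF _ tc_tendsto[OF assms(2,4)] tc_tendsto[OF assms(2,3)] ev]) simp
qed

lemma tc_hom:
  fixes C :: "real ^ 'd \<Rightarrow> real"
  assumes "has_tail_copula C" "x \<in> pos_orthant" "0 < c"
  shows "tail_copula C (c *\<^sub>R x) = c * tail_copula C x"
proof -
  have cx: "c *\<^sub>R x \<in> pos_orthant" using assms by (auto simp: pos_orthant_def)
  have fl: "filterlim (\<lambda>t. t * c) (at_right 0) (at_right (0::real))"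
    unfolding filterlim_at
  proof
    show "eventually (\<lambda>t. t * c \<in> {0<..} \<and> t * c \<noteq> 0) (at_right (0::real))"
      using eventually_at_right_less[of 0] by eventually_elim (use assms in auto)
    have "((\<lambda>t. t * c) \<longlongrightarrow> 0 * c) (at_right (0::real))"
      by (intro tendsto_intros)
    then show "((\<lambda>t. t * c) \<longlongrightarrow> 0) (at_right (0::real))" by simp
  qed
  have "((\<lambda>t. c * (C ((t * c) *\<^sub>R x) / (t * c))) \<longlongrightarrow> c * tail_copula C x) (at_right 0)"
    by (intro tendsto_mult_left filterlim_compose[OF tc_tendsto[OF assms(1,2)] fl])
  moreover have "eventually (\<lambda>t. c * (C ((t * c) *\<^sub>R x) / (t * c)) = C (t *\<^sub>R (c *\<^sub>R x)) / t) (at_right 0)"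
    using eventually_at_right_less[of 0] by eventually_elim (use assms in \<open>auto simp: mult.commute\<close>)
  ultimately have "((\<lambda>t. C (t *\<^sub>R (c *\<^sub>R x)) / t) \<longlongrightarrow> c * tail_copula C x) (at_right 0)"
    by (rule Lim_transform_eventually)
  then show ?thesis unfolding tail_copula_def by (intro tendsto_Lim) auto
qed

lemma tc_dist:
  fixes C :: "real ^ 'd \<Rightarrow> real"
  assumes "is_copula C" "has_tail_copula C" "x \<in> pos_orthant" "y \<in> pos_orthant"
  shows "\<bar>tail_copula C x - tail_copula C y\<bar> \<le> real CARD('d) * dist x y"
proof -
  have s: "(\<Sum>i\<in>UNIV. \<bar>y $ i - x $ i\<bar>) \<le> real CARD('d) * dist x y"
  proof -
    have "(\<Sum>i\<in>UNIV. \<bar>y $ i - x $ i\<bar>) \<le> (\<Sum>i\<in>(UNIV::'d set). dist x y)"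
    proof (intro sum_mono)
      fix i
      have "\<bar>(x - y) $ i\<bar> \<le> norm (x - y)" by (rule component_le_norm_cart)
      then show "\<bar>y $ i - x $ i\<bar> \<le> dist x y" by (simp add: dist_norm abs_minus_commute)
    qed
    then show ?thesis by simp
  qed
  have s': "(\<Sum>i\<in>UNIV. \<bar>x $ i - y $ i\<bar>) = (\<Sum>i\<in>UNIV. \<bar>y $ i - x $ i\<bar>)"
    by (simp add: abs_minus_commute)
  show ?thesis using tc_lip[OF assms] tc_lip[OF assms(1,2,4,3)] s s' by linarith
qed



lemma B_pos: "B_set \<subseteq> pos_orthant"
  by (auto simp: B_set_def pos_orthant_def)

lemma one_B: "(\<chi> i. (1::real)) \<in> B_set"
  by (auto simp: B_set_def)

lemma B_ne: "B_set \<noteq> {}" using one_B by blast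

lemma tc_le1:
  fixes C :: "real ^ 'd \<Rightarrow> real"
  assumes "is_copula C" "has_tail_copula C" "b \<in> B_set"
  shows "tail_copula C b \<le> 1"
proof -
  have bp: "b \<in> pos_orthant" using assms(3) B_pos by blast
  have "(\<Prod>i\<in>(UNIV::'d set). tail_copula C b) \<le> (\<Prod>i\<in>UNIV. b $ i)"
    using tc_bounds[OF assms(1,2) bp] by (intro prod_mono) auto
  also have "\<dots> = 1" using assms(3) by (simp add: B_set_def)
  finally have "tail_copula C b ^ CARD('d) \<le> 1" by simp
  then show ?thesis using tc_bounds[OF assms(1,2) bp] by (simp add: power_le_one_iff)
qed

lemma tc_bdd:
  fixes C :: "real ^ 'd \<Rightarrow> real"
  assumes "is_copula C" "has_tail_copula C"
  shows "bdd_above (tail_copula C ` B_set)"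
  using tc_le1[OF assms] by (intro bdd_aboveI[of _ 1]) auto

lemma mtcm_ge:
  fixes C :: "real ^ 'd \<Rightarrow> real"
  assumes "is_copula C" "has_tail_copula C" "b \<in> B_set"
  shows "tail_copula C b \<le> mtcm C"
  unfolding mtcm_def by (rule cSUP_upper[OF assms(3) tc_bdd[OF assms(1,2)]])

lemma mtcm_le:
  fixes C :: "real ^ 'd \<Rightarrow> real"
  assumes "\<And>b. b \<in> B_set \<Longrightarrow> tail_copula C b \<le> M"
  shows "mtcm C \<le> M"
  unfolding mtcm_def by (rule cSUP_least[OF B_ne assms])

lemma mtcm_nonneg:
  fixes C :: "real ^ 'd \<Rightarrow> real"
  assumes "is_copula C" "has_tail_copula C"
  shows "0 \<le> mtcm C"
  using mtcm_ge[OF assms one_B] tc_bounds[OF assms, of "\<chi> i. 1"] one_B B_pos by fastforce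

definition Kset :: "real \<Rightarrow> (real^'d) set" where
  "Kset e = {b. (\<forall>i. e \<le> b $ i) \<and> (\<Prod>i\<in>UNIV. b $ i) = 1}"

lemma Kset_B: "0 < e \<Longrightarrow> Kset e \<subseteq> B_set"
  by (auto simp: Kset_def B_set_def intro: less_le_trans)

lemma Kset_compact:
  assumes "0 < e"
  shows "compact (Kset e :: (real^'d) set)"
proof -
  define R where "R = 1 / e ^ (CARD('d) - 1)"
  have comp: "b $ i \<le> R" if "b \<in> Kset e" for b :: "real^'d" and i
  proof -
    have b: "\<forall>j. e \<le> b $ j" "(\<Prod>j\<in>UNIV. b $ j) = 1" using that by (auto simp: Kset_def)
    have "1 = b $ i * (\<Prod>j\<in>UNIV - {i}. b $ j)"
      using b(2) prod.remove[of "UNIV::'d set" i "\<lambda>j. b $ j"] by simp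
    also have "\<dots> \<ge> b $ i * (\<Prod>j\<in>UNIV - {i}. e)"
      using b(1) assms by (intro mult_left_mono prod_mono) (auto intro: less_le_trans order.strict_implies_order)
    finally have "b $ i * e ^ (CARD('d) - 1) \<le> 1"
      by (simp add: card_Diff_singleton)
    then show ?thesis unfolding R_def using assms by (simp add: field_simps)
  qed
  have "bounded (Kset e :: (real^'d) set)"
    unfolding bounded_iff
  proof (intro exI ballI)
    fix b :: "real^'d" assume bK: "b \<in> Kset e"
    have "norm b \<le> (\<Sum>i\<in>UNIV. \<bar>b $ i\<bar>)" by (rule norm_le_l1_cart)
    also have "\<dots> \<le> (\<Sum>i\<in>(UNIV::'d set). R)"
    proof (intro sum_mono)
      fix i
      have "0 \<le> b $ i" using bK assms by (auto simp: Kset_def intro: order.trans[of 0 e] less_imp_le)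
      then show "\<bar>b $ i\<bar> \<le> R" using comp[OF bK, of i] by simp
    qed
    finally show "norm b \<le> real CARD('d) * R" by simp
  qed
  moreover have "closed (Kset e :: (real^'d) set)"
    unfolding Kset_def
    by (intro closed_Collect_conj closed_Collect_all closed_Collect_le closed_Collect_eq continuous_intros)
  ultimately show ?thesis by (simp add: compact_eq_bounded_closed)
qed

lemma tc_cont:
  fixes C :: "real ^ 'd \<Rightarrow> real"
  assumes "is_copula C" "has_tail_copula C"
  shows "continuous_on pos_orthant (tail_copula C)"
proof (rule lipschitz_on_continuous_on)
  show "(real CARD('d))-lipschitz_on pos_orthant (tail_copula C)"
    using tc_dist[OF assms] by (intro lipschitz_onI) (auto simp: dist_real_def)
qed

lemma attain:
  fixes C :: "real ^ 'd \<Rightarrow> real"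
  assumes "is_copula C" "has_tail_copula C"
  shows "\<exists>b\<in>B_set. tail_copula C b = mtcm C"
proof (cases "mtcm C = 0")
  case True
  show ?thesis
    using True mtcm_ge[OF assms one_B] tc_bounds[OF assms, of "\<chi> i. 1"] one_B B_pos
    by (intro bexI[OF _ one_B]) fastforce
next
  case False
  then have mpos: "0 < mtcm C" using mtcm_nonneg[OF assms] by simp
  define e where "e = mtcm C / 2"
  have e: "0 < e" "e < mtcm C" using mpos by (auto simp: e_def)
  obtain b1 where b1: "b1 \<in> B_set" "e < tail_copula C b1"
    using e(2) less_cSUP_iff[OF B_ne tc_bdd[OF assms]] unfolding mtcm_def by blast
  have b1K: "b1 \<in> Kset e"
  proof -
    have "b1 \<in> pos_orthant" using b1 B_pos by blast
    then have "e \<le> b1 $ i" for i using b1(2) tc_bounds[OF assms, of b1 i] by linarith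
    then show ?thesis using b1(1) by (auto simp: Kset_def B_set_def)
  qed
  obtain b0 where b0: "b0 \<in> Kset e" "\<forall>y\<in>Kset e. tail_copula C y \<le> tail_copula C b0"
    using continuous_attains_sup[OF Kset_compact[OF e(1)] _ continuous_on_subset[OF tc_cont[OF assms]]]
      b1K Kset_B[OF e(1)] B_pos by blast
  have b0B: "b0 \<in> B_set" using b0(1) Kset_B[OF e(1)] by blast
  have "mtcm C \<le> tail_copula C b0"
  proof (rule mtcm_le)
    fix b :: "real^'d" assume bB: "b \<in> B_set"
    show "tail_copula C b \<le> tail_copula C b0"
    proof (cases "\<forall>i. e \<le> b $ i")
      case True
      then have "b \<in> Kset e" using bB by (auto simp: Kset_def B_set_def)
      then show ?thesis using b0 by blast
    next
      case False
      then obtain i where "b $ i < e" by (auto simp: not_le)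
      then have "tail_copula C b < e" using tc_bounds[OF assms, of b i] bB B_pos by force
      then show ?thesis using b1 b0(2) b1K by force
    qed
  qed
  then show ?thesis using mtcm_ge[OF assms b0B] b0B by (intro bexI[of _ b0]) auto
qed



lemma prod_ge1_eq:
  fixes b :: "'a \<Rightarrow> real"
  assumes "finite I" "\<forall>i\<in>I. 1 \<le> b i" "(\<Prod>i\<in>I. b i) = 1" "j \<in> I"
  shows "b j = 1"
proof -
  have "1 = b j * (\<Prod>i\<in>I - {j}. b i)" using assms prod.remove[of I j b] by simp
  moreover have "1 \<le> (\<Prod>i\<in>I - {j}. b i)" using assms by (intro prod_ge_1) auto
  moreover have "1 \<le> b j" using assms by auto
  moreover have "b j * 1 \<le> b j * (\<Prod>i\<in>I - {j}. b i)"
    using calculation by (intro mult_left_mono) auto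
  ultimately show ?thesis by linarith
qed

lemma part2:
  fixes C :: "real ^ 'd \<Rightarrow> real"
  assumes "is_copula C" "has_tail_copula C"
  shows "mtcm C = 1 \<longleftrightarrow> (\<forall>x\<in>pos_orthant. tail_copula C x = Min (range (\<lambda>i. x $ i)))"
proof
  assume m1: "mtcm C = 1"
  obtain bs where bs: "bs \<in> B_set" "tail_copula C bs = 1" using attain[OF assms] m1 by auto
  have "bs $ i = 1" for i
  proof (rule prod_ge1_eq[of UNIV "\<lambda>i. bs $ i"])
    show "\<forall>i\<in>UNIV. 1 \<le> bs $ i" using tc_bounds[OF assms, of bs] bs B_pos by auto
  qed (use bs in \<open>auto simp: B_set_def\<close>)
  then have bs1: "bs = (\<chi> i. 1)" by (simp add: vec_eq_iff)
  show "\<forall>x\<in>pos_orthant. tail_copula C x = Min (range (\<lambda>i. x $ i))"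
  proof
    fix x :: "real^'d" assume x: "x \<in> pos_orthant"
    define m where "m = Min (range (\<lambda>i. x $ i))"
    have "m \<in> range (\<lambda>i. x $ i)" unfolding m_def by (intro Min_in) auto
    then obtain i0 where i0: "m = x $ i0" by auto
    have mle: "m \<le> x $ i" for i unfolding m_def by (intro Min_le) auto
    have mpos: "0 < m" using i0 x by (auto simp: pos_orthant_def)
    have "tail_copula C x \<le> m" using tc_bounds[OF assms x, of i0] i0 by simp
    moreover have "m \<le> tail_copula C x"
    proof -
      have "tail_copula C (m *\<^sub>R (\<chi> i. 1)) = m * tail_copula C (\<chi> i. 1)"
        using one_B B_pos mpos by (intro tc_hom[OF assms(2)]) auto
      also have "\<dots> = m" using bs bs1 by simp
      finally have e: "tail_copula C (m *\<^sub>R (\<chi> i. 1)) = m" .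
      have "tail_copula C (m *\<^sub>R (\<chi> i. 1)) \<le> tail_copula C x"
        using mpos mle x by (intro tc_mono[OF assms]) (auto simp: pos_orthant_def)
      then show ?thesis using e by simp
    qed
    ultimately show "tail_copula C x = m" by simp
  qed
next
  assume h: "\<forall>x\<in>pos_orthant. tail_copula C x = Min (range (\<lambda>i. x $ i))"
  have r: "range (\<lambda>i. (\<chi> i. (1::real)) $ i) = {1}" by auto
  have "tail_copula C (\<chi> i. 1) = 1" using h one_B B_pos r
    by (metis Min_singleton subsetD)
  then have "1 \<le> mtcm C" using mtcm_ge[OF assms one_B] by simp
  moreover have "mtcm C \<le> 1" using tc_le1[OF assms] by (intro mtcm_le) auto
  ultimately show "mtcm C = 1" by simp
qed

lemma part3:
  fixes C :: "real ^ 'd \<Rightarrow> real"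
  assumes "is_copula C" "has_tail_copula C"
  shows "mtcm C = 0 \<longleftrightarrow> (\<forall>x\<in>pos_orthant. tail_copula C x = 0)"
proof
  assume m0: "mtcm C = 0"
  show "\<forall>x\<in>pos_orthant. tail_copula C x = 0"
  proof
    fix x :: "real^'d" assume x: "x \<in> pos_orthant"
    define P where "P = (\<Prod>i\<in>UNIV. x $ i)"
    have Ppos: "0 < P" unfolding P_def using x by (intro prod_pos) (auto simp: pos_orthant_def)
    define c where "c = P powr (1 / real CARD('d))"
    have cpos: "0 < c" using Ppos by (simp add: c_def)
    have cpow: "c ^ CARD('d) = P"
    proof -
      have "c ^ CARD('d) = c powr real CARD('d)" using cpos by (simp add: powr_realpow)
      also have "\<dots> = P powr (1 / real CARD('d) * real CARD('d))" unfolding c_def by (simp add: powr_powr)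
      also have "\<dots> = P" using Ppos by simp
      finally show ?thesis .
    qed
    define b where "b = (1 / c) *\<^sub>R x"
    have "(\<Prod>i\<in>UNIV. b $ i) = (\<Prod>i\<in>UNIV. x $ i) / c ^ CARD('d)"
      unfolding b_def by (simp add: prod_dividef)
    also have "\<dots> = 1" using cpow Ppos by (simp flip: P_def)
    finally have bB: "b \<in> B_set" using x cpos by (auto simp: B_set_def b_def pos_orthant_def)
    have "tail_copula C b = 0"
    proof -
      have "b \<in> pos_orthant" using bB B_pos by blast
      then show ?thesis using mtcm_ge[OF assms bB] tc_bounds[OF assms, of b] m0 by fastforce
    qed
    moreover have "x = c *\<^sub>R b" using cpos by (simp add: b_def)
    ultimately show "tail_copula C x = 0"
      using tc_hom[OF assms(2), of b c] bB B_pos cpos by auto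
  qed
next
  assume h: "\<forall>x\<in>pos_orthant. tail_copula C x = 0"
  have "mtcm C \<le> 0" using h B_pos by (intro mtcm_le) auto
  then show "mtcm C = 0" using mtcm_nonneg[OF assms] by simp
qed

lemma part4:
  fixes C1 C2 :: "real ^ 'd \<Rightarrow> real"
  assumes "is_copula C2" "has_tail_copula C2"
    and "\<forall>x\<in>pos_orthant. tail_copula C1 x \<le> tail_copula C2 x"
  shows "mtcm C1 \<le> mtcm C2"
proof (rule mtcm_le)
  fix b :: "real^'d" assume bB: "b \<in> B_set"
  then have "b \<in> pos_orthant" using B_pos by blast
  then show "tail_copula C1 b \<le> mtcm C2" using assms(3) mtcm_ge[OF assms(1,2) bB] by (meson order.trans)
qed

lemma tc_mix:
  fixes C1 C2 :: "real ^ 'd \<Rightarrow> real"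
  assumes "has_tail_copula C1" "has_tail_copula C2" "x \<in> pos_orthant"
  shows "tail_copula (\<lambda>u. t * C1 u + (1 - t) * C2 u) x = t * tail_copula C1 x + (1 - t) * tail_copula C2 x"
proof -
  have "((\<lambda>s. t * (C1 (s *\<^sub>R x) / s) + (1 - t) * (C2 (s *\<^sub>R x) / s)) \<longlongrightarrow>
          t * tail_copula C1 x + (1 - t) * tail_copula C2 x) (at_right 0)"
    by (intro tendsto_intros tc_tendsto assms)
  then have "((\<lambda>s. (t * C1 (s *\<^sub>R x) + (1 - t) * C2 (s *\<^sub>R x)) / s) \<longlongrightarrow>
          t * tail_copula C1 x + (1 - t) * tail_copula C2 x) (at_right 0)"
    by (simp add: add_divide_distrib)
  then show ?thesis unfolding tail_copula_def by (intro tendsto_Lim) auto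
qed

lemma part5:
  fixes C1 C2 :: "real ^ 'd \<Rightarrow> real"
  assumes "is_copula C1" "has_tail_copula C1" "is_copula C2" "has_tail_copula C2" "t \<in> {0..1}"
  shows "mtcm (\<lambda>u. t * C1 u + (1 - t) * C2 u) \<le> t * mtcm C1 + (1 - t) * mtcm C2"
proof (rule mtcm_le)
  fix b :: "real^'d" assume bB: "b \<in> B_set"
  have "tail_copula (\<lambda>u. t * C1 u + (1 - t) * C2 u) b = t * tail_copula C1 b + (1 - t) * tail_copula C2 b"
    using bB B_pos by (intro tc_mix assms) auto
  also have "\<dots> \<le> t * mtcm C1 + (1 - t) * mtcm C2"
    using assms(5) mtcm_ge[OF assms(1,2) bB] mtcm_ge[OF assms(3,4) bB]
    by (intro add_mono mult_left_mono) auto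
  finally show "tail_copula (\<lambda>u. t * C1 u + (1 - t) * C2 u) b \<le> t * mtcm C1 + (1 - t) * mtcm C2" .
qed



lemma part6:
  fixes C :: "real ^ 'd \<Rightarrow> real" and Cs :: "nat \<Rightarrow> real ^ 'd \<Rightarrow> real"
  assumes "is_copula C" "has_tail_copula C"
    and cs: "\<forall>n. is_copula (Cs n) \<and> has_tail_copula (Cs n)"
    and conv: "\<forall>x\<in>pos_orthant. (\<lambda>n. tail_copula (Cs n) x) \<longlonglongrightarrow> tail_copula C x"
  shows "(\<lambda>n. mtcm (Cs n)) \<longlonglongrightarrow> mtcm C"
  unfolding tendsto_iff
proof (intro allI impI)
  fix e :: real assume e: "0 < e"
  obtain b0 where b0: "b0 \<in> B_set" "tail_copula C b0 = mtcm C" using attain[OF assms(1,2)] by blast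
  have b0p: "b0 \<in> pos_orthant" using b0 B_pos by blast
  have ev1: "eventually (\<lambda>n. dist (tail_copula (Cs n) b0) (tail_copula C b0) < e) sequentially"
    using conv[rule_format, OF b0p] e by (rule tendstoD)
  have lower: "eventually (\<lambda>n. mtcm C - e < mtcm (Cs n)) sequentially"
    using ev1
  proof eventually_elim
    case (elim n)
    have "tail_copula (Cs n) b0 \<le> mtcm (Cs n)" using mtcm_ge[OF _ _ b0(1)] cs by blast
    then show ?case using elim b0(2) by (simp add: dist_real_def abs_less_iff)
  qed
  define L where "L = real CARD('d)"
  define d where "d = e / (2 * (L + 1))"
  have L0: "0 \<le> L" by (simp add: L_def)
  have d0: "0 < d" using e L0 by (simp add: d_def)
  have nz: "2 * (L + 1) \<noteq> 0" using L0 by simp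
  have "d * (L + 1) = e / 2" unfolding d_def using nz by (simp add: field_simps)
  then have dL: "d + L * d = e / 2" by (simp add: algebra_simps)
  define K where "K = (Kset (e/2) :: (real^'d) set)"
  have Kc: "compact K" unfolding K_def using e by (intro Kset_compact) simp
  have KB: "K \<subseteq> B_set" unfolding K_def using e by (intro Kset_B) simp
  obtain k where k: "finite k" "k \<subseteq> K" "K \<subseteq> (\<Union>c\<in>k. ball c d)"
    using seq_compact_imp_totally_bounded[OF compact_imp_seq_compact[OF Kc], rule_format, OF d0] by (elim exE conjE) blast
  have ev2: "eventually (\<lambda>n. \<forall>c\<in>k. dist (tail_copula (Cs n) c) (tail_copula C c) < d) sequentially"
  proof (rule eventually_ball_finite[OF k(1)], intro ballI)
    fix c assume "c \<in> k"
    then have "c \<in> pos_orthant" using k(2) KB B_pos by blast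
    show "eventually (\<lambda>n. dist (tail_copula (Cs n) c) (tail_copula C c) < d) sequentially"
      using conv[rule_format, OF \<open>c \<in> pos_orthant\<close>] d0 by (rule tendstoD)
  qed
  have upper: "eventually (\<lambda>n. mtcm (Cs n) \<le> mtcm C + e / 2) sequentially"
    using ev2
  proof eventually_elim
    case (elim n)
    have cn: "is_copula (Cs n)" "has_tail_copula (Cs n)" using cs by auto
    show ?case
    proof (rule mtcm_le)
      fix b :: "real^'d" assume bB: "b \<in> B_set"
      have bp: "b \<in> pos_orthant" using bB B_pos by blast
      show "tail_copula (Cs n) b \<le> mtcm C + e / 2"
      proof (cases "b \<in> K")
        case True
        then obtain c where c: "c \<in> k" "dist c b < d"
        proof -
          have "b \<in> (\<Union>c\<in>k. ball c d)" using k(3) True by (rule subsetD)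
          then show ?thesis using that by (auto simp only: UN_iff mem_ball)
        qed
        have cp: "c \<in> pos_orthant" and cB: "c \<in> B_set" using c(1) k(2) KB B_pos by blast+
        have "tail_copula (Cs n) b \<le> tail_copula (Cs n) c + L * dist c b"
          using tc_dist[OF cn cp bp] unfolding L_def by linarith
        also have "\<dots> \<le> tail_copula C c + d + L * d"
        proof -
          have "tail_copula (Cs n) c < tail_copula C c + d"
            using elim c(1) by (auto simp: dist_real_def abs_less_iff)
          moreover have "L * dist c b \<le> L * d" using c(2) L0 by (intro mult_left_mono) auto
          ultimately show ?thesis by linarith
        qed
        also have "\<dots> \<le> mtcm C + e / 2" using mtcm_ge[OF assms(1,2) cB] dL by linarith
        finally show ?thesis .
      next
        case False
        have "\<not> (\<forall>i. e / 2 \<le> b $ i)"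
          using False bB unfolding K_def Kset_def B_set_def by blast
        then obtain i where "b $ i < e / 2" by (meson not_le)
        then have "tail_copula (Cs n) b < e / 2" using tc_bounds[OF cn bp, of i] by linarith
        then show ?thesis using mtcm_nonneg[OF assms(1,2)] by linarith
      qed
    qed
  qed
  show "eventually (\<lambda>n. dist (mtcm (Cs n)) (mtcm C) < e) sequentially"
    using lower upper
  proof eventually_elim
    case (elim n)
    then show ?case using e by (simp add: dist_real_def abs_less_iff)
  qed
qed

theorem proposition2p2:
  fixes C C1 C2 :: "real ^ 'd \<Rightarrow> real"
  assumes "CARD('d) \<ge> 2"
    and "is_copula C" and "has_tail_copula C"
    and "is_copula C1" and "has_tail_copula C1"
    and "is_copula C2" and "has_tail_copula C2"
  shows "(\<exists>b\<in>B_set. tail_copula C b = mtcm C)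
    \<and> (mtcm C = 1 \<longleftrightarrow> (\<forall>x\<in>pos_orthant. tail_copula C x = Min (range (\<lambda>i. x $ i))))
    \<and> (mtcm C = 0 \<longleftrightarrow> (\<forall>x\<in>pos_orthant. tail_copula C x = 0))
    \<and> ((\<forall>x\<in>pos_orthant. tail_copula C1 x \<le> tail_copula C2 x) \<longrightarrow> mtcm C1 \<le> mtcm C2)
    \<and> (\<forall>t\<in>{0..1::real}. mtcm (\<lambda>u. t * C1 u + (1 - t) * C2 u) \<le> t * mtcm C1 + (1 - t) * mtcm C2)
    \<and> (\<forall>Cs :: nat \<Rightarrow> real ^ 'd \<Rightarrow> real.
         (\<forall>n. is_copula (Cs n) \<and> has_tail_copula (Cs n)) \<longrightarrow>
         (\<forall>x\<in>pos_orthant. (\<lambda>n. tail_copula (Cs n) x) \<longlonglongrightarrow> tail_copula C x) \<longrightarrow>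
         (\<lambda>n. mtcm (Cs n)) \<longlonglongrightarrow> mtcm C)"
proof (intro conjI)
  show "\<exists>b\<in>B_set. tail_copula C b = mtcm C" by (rule attain[OF assms(2,3)])
  show "mtcm C = 1 \<longleftrightarrow> (\<forall>x\<in>pos_orthant. tail_copula C x = Min (range (\<lambda>i. x $ i)))"
    by (rule part2[OF assms(2,3)])
  show "mtcm C = 0 \<longleftrightarrow> (\<forall>x\<in>pos_orthant. tail_copula C x = 0)" by (rule part3[OF assms(2,3)])
  show "(\<forall>x\<in>pos_orthant. tail_copula C1 x \<le> tail_copula C2 x) \<longrightarrow> mtcm C1 \<le> mtcm C2"
    using part4[OF assms(6,7)] by blast
  show "\<forall>t\<in>{0..1::real}. mtcm (\<lambda>u. t * C1 u + (1 - t) * C2 u) \<le> t * mtcm C1 + (1 - t) * mtcm C2"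
    using part5[OF assms(4-7)] by blast
  show "\<forall>Cs :: nat \<Rightarrow> real ^ 'd \<Rightarrow> real.
         (\<forall>n. is_copula (Cs n) \<and> has_tail_copula (Cs n)) \<longrightarrow>
         (\<forall>x\<in>pos_orthant. (\<lambda>n. tail_copula (Cs n) x) \<longlonglongrightarrow> tail_copula C x) \<longrightarrow>
         (\<lambda>n. mtcm (Cs n)) \<longlonglongrightarrow> mtcm C"
    using part6[OF assms(2,3)] by blast
qed

end
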